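(* Let $p_1,p_2,p_3,p_4$ be distinct primes with $p_3>p_1p_2$ and $p_4>p_1p_2$. Then the numerical semigroup $S=\langle p_1p_3,\,p_2p_3,\,p_1p_4,\,p_2p_4\rangle$ is a complete intersection but is not free.
   Context: A numerical semigroup is a submonoid $S$ of $(\mathbb N,+)$ with finite complement in $\mathbb N$, with minimal system of generators $g_1,\dots,g_\nu$. $S$ is a complete intersection if the semigroup ring $\Bbbk[[t^S]]$ is a complete intersection, equivalently if a minimal presentation of $S$ (a minimal generating set of the congruence $\ker(\mathbb N^\nu\to S,\ (\lambda_i)\mapsto\sum\lambda_ig_i)$) has cardinality $\nu-1$. For $n\in S$, $\mathrm{Ap}(S,n)=\{s\in S: s-n\notin S\}$. For an ordering $\mathbf n=(n_1,\dots,n_\nu)$ of the minimal generators, $\phi_i=\min\{h\in\mathbb N: hn_i\in\langle n_1,\dots,n_{i-1}\rangle\}-1$ ($i=2,\dots,\nu$). $S$ is free if for some ordering $\mathrm{Ap}(S,n_1)=\{\sum_{i=2}^\nu\lambda_in_i: 0\le\lambda_i\le\phi_i\}$. *)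

theory Defs
  imports "HOL-Computational_Algebra.Primes"
begin

inductive_set gen :: "nat set \<Rightarrow> nat set" for A :: "nat set" where
  gen_zero: "0 \<in> gen A"
| gen_add: "a \<in> A \<Longrightarrow> s \<in> gen A \<Longrightarrow> a + s \<in> gen A"

definition numerical_semigroup :: "nat set \<Rightarrow> bool" where
  "numerical_semigroup S \<longleftrightarrow> 0 \<in> S \<and> (\<forall>a\<in>S. \<forall>b\<in>S. a + b \<in> S) \<and> finite (UNIV - S)"

definition min_gen_sys :: "nat set \<Rightarrow> nat set \<Rightarrow> bool" where
  "min_gen_sys S G \<longleftrightarrow> gen G = S \<and> (\<forall>H. H \<subset> G \<longrightarrow> gen H \<noteq> S)"

text \<open>Elements of N^\<nu>, represented as functions vanishing from index \<nu> on
  (indices 0..\<nu>-1).\<close>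
definition vecs :: "nat \<Rightarrow> (nat \<Rightarrow> nat) set" where
  "vecs \<nu> = {x. \<forall>i\<ge>\<nu>. x i = 0}"

definition vadd :: "(nat \<Rightarrow> nat) \<Rightarrow> (nat \<Rightarrow> nat) \<Rightarrow> (nat \<Rightarrow> nat)" where
  "vadd x y = (\<lambda>i. x i + y i)"

definition fact_map :: "nat list \<Rightarrow> (nat \<Rightarrow> nat) \<Rightarrow> nat" where
  "fact_map ns x = (\<Sum>i<length ns. x i * ns ! i)"

definition kernel_cong :: "nat list \<Rightarrow> ((nat \<Rightarrow> nat) \<times> (nat \<Rightarrow> nat)) set" where
  "kernel_cong ns = {(x, y). x \<in> vecs (length ns) \<and> y \<in> vecs (length ns) \<and> fact_map ns x = fact_map ns y}"

inductive_set cong_gen :: "nat \<Rightarrow> ((nat \<Rightarrow> nat) \<times> (nat \<Rightarrow> nat)) set \<Rightarrow> ((nat \<Rightarrow> nat) \<times> (nat \<Rightarrow> nat)) set"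
  for \<nu> :: nat and \<rho> :: "((nat \<Rightarrow> nat) \<times> (nat \<Rightarrow> nat)) set" where
  cg_base: "p \<in> \<rho> \<Longrightarrow> p \<in> cong_gen \<nu> \<rho>"
| cg_refl: "x \<in> vecs \<nu> \<Longrightarrow> (x, x) \<in> cong_gen \<nu> \<rho>"
| cg_sym: "(x, y) \<in> cong_gen \<nu> \<rho> \<Longrightarrow> (y, x) \<in> cong_gen \<nu> \<rho>"
| cg_trans: "(x, y) \<in> cong_gen \<nu> \<rho> \<Longrightarrow> (y, z) \<in> cong_gen \<nu> \<rho> \<Longrightarrow> (x, z) \<in> cong_gen \<nu> \<rho>"
| cg_add: "(x, y) \<in> cong_gen \<nu> \<rho> \<Longrightarrow> z \<in> vecs \<nu> \<Longrightarrow> (vadd x z, vadd y z) \<in> cong_gen \<nu> \<rho>"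

definition minimal_presentation :: "nat list \<Rightarrow> ((nat \<Rightarrow> nat) \<times> (nat \<Rightarrow> nat)) set \<Rightarrow> bool" where
  "minimal_presentation ns \<rho> \<longleftrightarrow>
     \<rho> \<subseteq> vecs (length ns) \<times> vecs (length ns) \<and>
     cong_gen (length ns) \<rho> = kernel_cong ns \<and>
     (\<forall>\<sigma>. \<sigma> \<subset> \<rho> \<longrightarrow> cong_gen (length ns) \<sigma> \<noteq> kernel_cong ns)"

definition complete_intersection :: "nat set \<Rightarrow> bool" where
  "complete_intersection S \<longleftrightarrow>
     (\<exists>ns \<rho>. distinct ns \<and> min_gen_sys S (set ns) \<and> minimal_presentation ns \<rho> \<and>
             finite \<rho> \<and> card \<rho> = length ns - 1)"

definition Apery :: "nat set \<Rightarrow> nat \<Rightarrow> nat set" where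
  "Apery S n = {s \<in> S. \<not> (n \<le> s \<and> s - n \<in> S)}"

text \<open>phi for 0-based index i (paper's index i+1):
  least positive h with h * n_i in the monoid generated by the previous generators, minus 1.\<close>
definition phi :: "nat list \<Rightarrow> nat \<Rightarrow> nat" where
  "phi ns i = (LEAST h. h > 0 \<and> h * ns ! i \<in> gen (set (take i ns))) - 1"

definition free_sg :: "nat set \<Rightarrow> bool" where
  "free_sg S \<longleftrightarrow>
     (\<exists>ns. distinct ns \<and> min_gen_sys S (set ns) \<and> ns \<noteq> [] \<and>
        Apery S (ns ! 0) =
          {(\<Sum>i\<in>{1..<length ns}. l i * ns ! i) | l. \<forall>i\<in>{1..<length ns}. l i \<le> phi ns i})"

end

theory Submission
  imports Defs "HOL-Number_Theory.Cong"
begin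



lemma gen_empty: "gen {} = {0}"
proof
  show "gen {} \<subseteq> {0}" by (auto elim: gen.induct)
qed (auto intro: gen.intros)

lemma gen_add_closed: "s \<in> gen A \<Longrightarrow> t \<in> gen A \<Longrightarrow> s + t \<in> gen A"
  by (induction s rule: gen.induct) (auto simp: add.assoc intro: gen.intros)

lemma gen_mult: "a \<in> A \<Longrightarrow> k * a \<in> gen A"
  by (induction k) (auto intro: gen.intros)

lemma gen_mono: "A \<subseteq> B \<Longrightarrow> gen A \<subseteq> gen B"
proof
  fix x assume "x \<in> gen A" "A \<subseteq> B" then show "x \<in> gen B"
    by (induction x rule: gen.induct) (auto intro: gen.intros)
qed

lemma gen_insert: "gen (insert a A) = {k * a + s | k s. s \<in> gen A}"
proof
  show "gen (insert a A) \<subseteq> {k * a + s | k s. s \<in> gen A}"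
  proof
    fix x assume "x \<in> gen (insert a A)" then show "x \<in> {k * a + s | k s. s \<in> gen A}"
    proof (induction x rule: gen.induct)
      case gen_zero then show ?case by (force intro: gen.intros)
    next
      case (gen_add b s)
      then obtain k t where s: "s = k * a + t" "t \<in> gen A" by auto
      show ?case
      proof (cases "b = a")
        case True then have "b + s = Suc k * a + t" using s by simp
        then show ?thesis using s by blast
      next
        case False then have "b \<in> A" using gen_add by auto
        then have "b + t \<in> gen A" using s by (auto intro: gen.intros)
        moreover have "b + s = k * a + (b + t)" using s by simp
        ultimately show ?thesis by blast
      qed
    qed
  qed
next
  show "{k * a + s | k s. s \<in> gen A} \<subseteq> gen (insert a A)"
  proof clarify
    fix k s assume "s \<in> gen A"
    then have "s \<in> gen (insert a A)" using gen_mono[of A "insert a A"] by auto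
    moreover have "k * a \<in> gen (insert a A)" by (rule gen_mult) auto
    ultimately show "k * a + s \<in> gen (insert a A)" by (simp add: gen_add_closed)
  qed
qed

lemma gen1: "gen {a} = {k * a | k. True}"
  by (auto simp: gen_insert gen_empty)

lemma gen2: "gen {a, b} = {i * a + j * b | i j. True}"
  by (auto simp: gen_insert gen_empty)

lemma gen3: "gen {a, b, c} = {i * a + j * b + k * c | i j k. True}"
proof -
  have "gen {a, b, c} = {i * a + (j * b + k * c) | i j k. True}"
    by (auto simp: gen_insert gen_empty) blast
  then show ?thesis by (simp add: add.assoc)
qed

lemma gen_less: "x \<in> gen A \<Longrightarrow> x < g \<Longrightarrow> x \<in> gen (A - {g})"
  by (induction x rule: gen.induct) (auto intro: gen.intros)




lemma two_gen_repr:
  fixes a b n :: nat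
  assumes "coprime a b" "a > 0" "b > 0" "n \<ge> a * b"
  shows "\<exists>i j. n = i * a + j * b"
proof -
  obtain x where x: "[a * x = 1] (mod b)" using cong_solve_coprime_nat[OF assms(1)] by auto
  define i where "i = (x * n) mod b"
  have "[a * i = a * (x * n)] (mod b)" unfolding i_def by (simp add: cong_def mod_mult_right_eq)
  moreover have "[a * (x * n) = 1 * n] (mod b)" using cong_mult[OF x cong_refl[of n]] by (simp add: mult.assoc)
  ultimately have c: "[a * i = n] (mod b)" by (metis cong_trans mult_1)
  have "i < b" unfolding i_def using assms by simp
  then have "a * i \<le> a * b" by simp
  then have le: "a * i \<le> n" using assms by linarith
  then have "[n - a * i = 0] (mod b)" using c by (simp add: cong_diff_iff_cong_0_nat cong_sym)
  then obtain j where "n - a * i = b * j" by (auto simp: cong_0_iff)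
  then have "n = i * a + j * b" using le by (simp add: algebra_simps)
  then show ?thesis by blast
qed

lemma prod_prime_eq:
  fixes a b c d :: nat
  assumes "prime a" "prime b" "prime c" "prime d" "a * b = c * d"
  shows "(a = c \<and> b = d) \<or> (a = d \<and> b = c)"
proof -
  have "a dvd c * d" using assms(5) by (metis dvd_triv_left)
  then have "a = c \<or> a = d" using assms by (meson prime_dvd_multD primes_dvd_imp_eq)
  then show ?thesis using assms prime_gt_0_nat
    by (metis mult.commute mult_cancel_left nat_neq_iff not_less0)
qed

lemma irred:
  fixes P Q R T :: nat
  assumes "prime P" "prime Q" "prime R" "prime T" "P \<noteq> Q" "R \<noteq> T" "T > P"
  shows "P * R \<notin> gen {Q * R, P * T, Q * T}"
proof
  assume "P * R \<in> gen {Q * R, P * T, Q * T}"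
  then obtain i j k where e: "P * R = i * (Q * R) + j * (P * T) + k * (Q * T)" by (auto simp: gen3)
  then have e2: "P * R = i * Q * R + T * (j * P + k * Q)" by (simp add: algebra_simps)
  have "R dvd T * (j * P + k * Q)"
    using e2 by (metis dvd_add_right_iff dvd_triv_left dvd_triv_right)
  moreover have "coprime R T" using assms primes_coprime by blast
  ultimately have dv: "R dvd j * P + k * Q" using coprime_dvd_mult_right_iff by blast
  show False
  proof (cases "j * P + k * Q = 0")
    case True
    then have "P * R = i * Q * R" using e2 by simp
    then have "P = i * Q" using assms(3) prime_gt_0_nat by simp
    then have "Q dvd P" by simp
    then show False using assms primes_dvd_imp_eq by blast
  next
    case False
    then have "R \<le> j * P + k * Q" using dv by (simp add: dvd_imp_le)
    then have "T * R \<le> T * (j * P + k * Q)" by simp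
    moreover have "P * R < T * R" using assms prime_gt_0_nat by simp
    ultimately show False using e2 by linarith
  qed
qed




lemma gen_sub: "A \<subseteq> gen A"
  using gen.gen_add[OF _ gen.gen_zero] by fastforce

lemma gen_remove0: "gen (H - {0}) = gen H"
proof
  show "gen (H - {0}) \<subseteq> gen H" by (rule gen_mono) auto
  show "gen H \<subseteq> gen (H - {0})"
  proof
    fix x assume "x \<in> gen H" then show "x \<in> gen (H - {0})"
    proof (induction x rule: gen.induct)
      case (gen_add a s) then show ?case by (cases "a = 0") (auto intro: gen.intros)
    qed (auto intro: gen.intros)
  qed
qed

lemma min_gen_unique:
  assumes irr: "\<forall>g\<in>G. g \<notin> gen (G - {g})" and m: "min_gen_sys (gen G) H"
  shows "H = G"
proof -
  have eq: "gen H = gen G" and mn: "\<And>K. K \<subset> H \<Longrightarrow> gen K \<noteq> gen G" using m unfolding min_gen_sys_def by auto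
  have "0 \<notin> H"
  proof
    assume "0 \<in> H" then have "H - {0} \<subset> H" by auto
    then show False using mn gen_remove0 eq by metis
  qed
  have GH: "G \<subseteq> H"
  proof
    fix g assume g: "g \<in> G"
    have "g \<noteq> 0" using irr g gen.gen_zero[of "G - {g}"] by metis
    have "g \<in> gen H" using eq g gen_sub by auto
    then show "g \<in> H"
    proof (cases rule: gen.cases)
      case gen_zero then show ?thesis using \<open>g \<noteq> 0\<close> by simp
    next
      case (gen_add h s)
      have "h \<noteq> 0" using gen_add \<open>0 \<notin> H\<close> by metis
      have hG: "h \<in> gen G" using gen_add eq gen_sub by auto
      have sG: "s \<in> gen G" using gen_add eq by auto
      show ?thesis
      proof (cases "s = 0")
        case True then show ?thesis using gen_add by simp
      next
        case False
        have "h \<in> gen (G - {g})" using gen_less[OF hG] False gen_add by auto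
        moreover have "s \<in> gen (G - {g})" using gen_less[OF sG] \<open>h \<noteq> 0\<close> gen_add by auto
        ultimately have "g \<in> gen (G - {g})" using gen_add gen_add_closed by auto
        then show ?thesis using irr g by auto
      qed
    qed
  qed
  show "H = G"
  proof (rule ccontr)
    assume "H \<noteq> G" then have "G \<subset> H" using GH by auto
    then show False using mn by auto
  qed
qed

locale four =
  fixes a1 a2 b1 b2 :: nat
  assumes pr: "prime a1" "prime a2" "prime b1" "prime b2"
    and dist: "distinct [a1, a2, b1, b2]"
    and big: "b1 > a1 * a2" "b2 > a1 * a2"
begin

definition "G = {a1 * b1, a2 * b1, a1 * b2, a2 * b2}"

lemma pos: "a1 > 0" "a2 > 0" "b1 > 0" "b2 > 0"
  using pr prime_gt_0_nat by auto

lemma two: "a1 \<ge> 2" "a2 \<ge> 2" "b1 \<ge> 2" "b2 \<ge> 2"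
  using pr prime_ge_2_nat by auto

lemma bigs: "b1 > a1" "b1 > a2" "b2 > a1" "b2 > a2"
proof -
  have "a1 * a2 \<ge> a1 * 2" "a1 * a2 \<ge> 2 * a2" using two by simp_all
  then show "b1 > a1" "b1 > a2" "b2 > a1" "b2 > a2" using big two by linarith+
qed

lemma neq: "a1 * b1 \<noteq> a2 * b1" "a1 * b1 \<noteq> a1 * b2" "a1 * b1 \<noteq> a2 * b2"
  "a2 * b1 \<noteq> a1 * b2" "a2 * b1 \<noteq> a2 * b2" "a1 * b2 \<noteq> a2 * b2"
  using prod_prime_eq[of a1 b1 a2 b2] prod_prime_eq[of a2 b1 a1 b2] pr dist pos by auto

lemma irr: "\<forall>g\<in>G. g \<notin> gen (G - {g})"
proof -
  have d: "distinct [a2, a1, b1, b2]" "distinct [a1, a2, b2, b1]" "distinct [a2, a1, b2, b1]"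
    using dist by auto
  have 1: "a1 * b1 \<notin> gen {a2 * b1, a1 * b2, a2 * b2}" using irred[of a1 a2 b1 b2] pr dist bigs by auto
  have 2: "a2 * b1 \<notin> gen {a1 * b1, a2 * b2, a1 * b2}" using irred[of a2 a1 b1 b2] pr dist bigs by auto
  have 3: "a1 * b2 \<notin> gen {a2 * b2, a1 * b1, a2 * b1}" using irred[of a1 a2 b2 b1] pr dist bigs by auto
  have 4: "a2 * b2 \<notin> gen {a1 * b2, a2 * b1, a1 * b1}" using irred[of a2 a1 b2 b1] pr dist bigs by auto
  have "G - {a1 * b1} = {a2 * b1, a1 * b2, a2 * b2}" "G - {a2 * b1} = {a1 * b1, a2 * b2, a1 * b2}"
    "G - {a1 * b2} = {a2 * b2, a1 * b1, a2 * b1}" "G - {a2 * b2} = {a1 * b2, a2 * b1, a1 * b1}"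
    unfolding G_def using neq by auto
  then show ?thesis using 1 2 3 4 unfolding G_def by auto
qed

lemma min_gen: "min_gen_sys (gen G) G"
  unfolding min_gen_sys_def
proof (intro conjI allI impI notI)
  show "gen G = gen G" by simp
  fix H assume "H \<subset> G" "gen H = gen G"
  then obtain g where g: "g \<in> G" "H \<subseteq> G - {g}" by auto
  then have "gen H \<subseteq> gen (G - {g})" using gen_mono[OF g(2)] by simp
  moreover have "g \<in> gen G" using g gen_sub by auto
  ultimately show False using irr g \<open>gen H = gen G\<close> by auto
qed

lemma numsg: "numerical_semigroup (gen G)"
  unfolding numerical_semigroup_def
proof (intro conjI)
  show "0 \<in> gen G" by (rule gen.gen_zero)
  show "\<forall>a\<in>gen G. \<forall>b\<in>gen G. a + b \<in> gen G" using gen_add_closed by auto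
  have cop: "coprime (a1 * b1) (a2 * b2)"
    using pr dist by (simp add: primes_coprime)
  have "UNIV - gen G \<subseteq> {..< (a1 * b1) * (a2 * b2)}"
  proof
    fix n assume n: "n \<in> UNIV - gen G"
    show "n \<in> {..< (a1 * b1) * (a2 * b2)}"
    proof (rule ccontr)
      assume "n \<notin> {..< (a1 * b1) * (a2 * b2)}"
      then have "n \<ge> (a1 * b1) * (a2 * b2)" by simp
      then obtain i j where "n = i * (a1 * b1) + j * (a2 * b2)"
        using two_gen_repr[OF cop] pos by (metis nat_0_less_mult_iff)
      moreover have "i * (a1 * b1) + j * (a2 * b2) \<in> gen G"
        using gen_mult[of "a1 * b1" G i] gen_mult[of "a2 * b2" G j] gen_add_closed unfolding G_def by auto
      ultimately show False using n by auto
    qed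
  qed
  then show "finite (UNIV - gen G)" using finite_subset by blast
qed

end



definition vec4 :: "nat \<Rightarrow> nat \<Rightarrow> nat \<Rightarrow> nat \<Rightarrow> nat \<Rightarrow> nat" where
  "vec4 a b c d = (\<lambda>i. if i = 0 then a else if i = 1 then b else if i = 2 then c else if i = 3 then d else 0)"

lemma vec4_vecs[simp]: "vec4 a b c d \<in> vecs 4"
  by (simp add: vec4_def vecs_def)

lemma vec4_app[simp]: "vec4 a b c d 0 = a" "vec4 a b c d 1 = b" "vec4 a b c d 2 = c" "vec4 a b c d 3 = d"
  by (simp_all add: vec4_def)

lemma vec4_app1[simp]: "vec4 a b c d (Suc 0) = b"
  by (simp add: vec4_def)

lemma vecs_vec4: "x \<in> vecs 4 \<Longrightarrow> x = vec4 (x 0) (x 1) (x 2) (x 3)"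
proof (rule ext)
  fix i assume "x \<in> vecs 4"
  then have z: "\<forall>i\<ge>4. x i = 0" by (simp add: vecs_def)
  show "x i = vec4 (x 0) (x 1) (x 2) (x 3) i"
  proof (cases "i \<ge> 4")
    case True then show ?thesis using z by (simp add: vec4_def)
  next
    case False then have "i = 0 \<or> i = 1 \<or> i = 2 \<or> i = 3" by linarith
    then show ?thesis by (auto simp: vec4_def)
  qed
qed

lemma vadd_vec4[simp]: "vadd (vec4 a b c d) (vec4 a' b' c' d') = vec4 (a + a') (b + b') (c + c') (d + d')"
  by (auto simp: vadd_def vec4_def)

lemma vec4_eq_iff: "vec4 a b c d = vec4 a' b' c' d' \<longleftrightarrow> a = a' \<and> b = b' \<and> c = c' \<and> d = d'"
  by (metis vec4_app)

lemma fact_map4: "fact_map [n1, n2, n3, n4] (vec4 a b c d) = a * n1 + b * n2 + c * n3 + d * n4"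
  by (simp add: fact_map_def numeral_eq_Suc lessThan_Suc vec4_def)

lemma lin_shift:
  fixes p q a b a' b' :: nat
  assumes "coprime p q" "a' \<le> a" "a * p + b * q = a' * p + b' * q" "q > 0"
  shows "\<exists>t. a = a' + t * q \<and> b' = b + t * p"
proof -
  have "a * p = a' * p + (a - a') * p" using assms(2)
    by (metis add_mult_distrib le_add_diff_inverse)
  then have e: "(a - a') * p + b * q = b' * q" using assms(3) by linarith
  then have "q dvd (a - a') * p" by (metis dvd_add_left_iff dvd_triv_right)
  then have "q dvd (a - a')" using assms(1) by (metis coprime_commute coprime_dvd_mult_left_iff)
  then obtain t where t: "a - a' = t * q" by (metis dvd_def mult.commute)
  then have "t * q * p + b * q = b' * q" using e by simp
  then have "(t * p + b) * q = b' * q" by (simp add: algebra_simps)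
  moreover have "q > 0" using assms(4) .
  ultimately have "b' = b + t * p" by simp
  moreover have "a = a' + t * q" using t assms(2) by simp
  ultimately show ?thesis by blast
qed




context four
begin

definition "ns = [a1 * b1, a2 * b1, a1 * b2, a2 * b2]"

lemma length_ns: "length ns = 4" by (simp add: ns_def)

lemma set_ns: "set ns = G" by (simp add: ns_def G_def)
lemma distinct_ns: "distinct ns" using neq by (simp add: ns_def)

lemma fm: "fact_map ns (vec4 a b c d) = b1 * (a * a1 + b * a2) + b2 * (c * a1 + d * a2)"
  by (simp add: ns_def fact_map4 algebra_simps)

lemma cop12: "coprime a1 a2" and cop34: "coprime b1 b2"
  using pr dist by (simp_all add: primes_coprime)

context
  fixes al be ga de :: nat
  assumes r: "al * a1 + be * a2 = b2" "ga * a1 + de * a2 = b1"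
begin

definition "R1 = (vec4 a2 0 0 0, vec4 0 a1 0 0)"
definition "R2 = (vec4 0 0 a2 0, vec4 0 0 0 a1)"
definition "R3 = (vec4 al be 0 0, vec4 0 0 ga de)"
definition "rho = {R1, R2, R3}"

abbreviation "CG \<equiv> cong_gen 4 rho"

lemma L1: "(vec4 (a + t * a2) b c d, vec4 a (b + t * a1) c d) \<in> CG"
proof (induction t arbitrary: b)
  case 0 show ?case by (simp add: cong_gen.cg_refl)
next
  case (Suc t)
  have "(vadd (fst R1) (vec4 (a + t * a2) b c d), vadd (snd R1) (vec4 (a + t * a2) b c d)) \<in> CG"
    by (rule cg_add) (auto simp: rho_def intro: cg_base)
  then have 1: "(vec4 (a + Suc t * a2) b c d, vec4 (a + t * a2) (b + a1) c d) \<in> CG"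
    by (simp add: R1_def algebra_simps)
  have "(vec4 (a + t * a2) (b + a1) c d, vec4 a (b + a1 + t * a1) c d) \<in> CG" by (rule Suc)
  then have 2: "(vec4 (a + t * a2) (b + a1) c d, vec4 a (b + Suc t * a1) c d) \<in> CG"
    by (simp add: algebra_simps)
  show ?case by (rule cg_trans[OF 1 2])
qed

lemma L2: "(vec4 a b (c + t * a2) d, vec4 a b c (d + t * a1)) \<in> CG"
proof (induction t arbitrary: d)
  case 0 show ?case by (simp add: cong_gen.cg_refl)
next
  case (Suc t)
  have "(vadd (fst R2) (vec4 a b (c + t * a2) d), vadd (snd R2) (vec4 a b (c + t * a2) d)) \<in> CG"
    by (rule cg_add) (auto simp: rho_def intro: cg_base)
  then have 1: "(vec4 a b (c + Suc t * a2) d, vec4 a b (c + t * a2) (d + a1)) \<in> CG"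
    by (simp add: R2_def algebra_simps)
  have "(vec4 a b (c + t * a2) (d + a1), vec4 a b c (d + a1 + t * a1)) \<in> CG" by (rule Suc)
  then have 2: "(vec4 a b (c + t * a2) (d + a1), vec4 a b c (d + Suc t * a1)) \<in> CG"
    by (simp add: algebra_simps)
  show ?case by (rule cg_trans[OF 1 2])
qed

lemma L3: "(vec4 (a + al) (b + be) c d, vec4 a b (c + ga) (d + de)) \<in> CG"
proof -
  have "(vadd (fst R3) (vec4 a b c d), vadd (snd R3) (vec4 a b c d)) \<in> CG"
    by (rule cg_add) (auto simp: rho_def intro: cg_base)
  then show ?thesis by (simp add: R3_def algebra_simps)
qed

lemma A1: "a * a1 + b * a2 = a' * a1 + b' * a2 \<Longrightarrow> (vec4 a b c d, vec4 a' b' c d) \<in> CG"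
proof (cases "a' \<le> a")
  case True
  assume e: "a * a1 + b * a2 = a' * a1 + b' * a2"
  obtain t where "a = a' + t * a2" "b' = b + t * a1" using lin_shift[OF cop12 True e pos(2)] by auto
  then show ?thesis using L1[of a' t b c d] by simp
next
  case False
  assume e: "a * a1 + b * a2 = a' * a1 + b' * a2"
  obtain t where "a' = a + t * a2" "b = b' + t * a1" using lin_shift[OF cop12 _ e[symmetric] pos(2)] False by auto
  then show ?thesis using L1[of a t b' c d] cg_sym by simp
qed

lemma A2: "c * a1 + d * a2 = c' * a1 + d' * a2 \<Longrightarrow> (vec4 a b c d, vec4 a b c' d') \<in> CG"
proof (cases "c' \<le> c")
  case True
  assume e: "c * a1 + d * a2 = c' * a1 + d' * a2"
  obtain t where "c = c' + t * a2" "d' = d + t * a1" using lin_shift[OF cop12 True e pos(2)] by auto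
  then show ?thesis using L2[of a b c' t d] by simp
next
  case False
  assume e: "c * a1 + d * a2 = c' * a1 + d' * a2"
  obtain t where "c' = c + t * a2" "d = d' + t * a1" using lin_shift[OF cop12 _ e[symmetric] pos(2)] False by auto
  then show ?thesis using L2[of a b c t d'] cg_sym by simp
qed

lemma main_k:
  "a * a1 + b * a2 = a' * a1 + b' * a2 + b2 * k \<Longrightarrow>
   b1 * (a * a1 + b * a2) + b2 * (c * a1 + d * a2) = b1 * (a' * a1 + b' * a2) + b2 * (c' * a1 + d' * a2) \<Longrightarrow>
   (vec4 a b c d, vec4 a' b' c' d') \<in> CG"
proof (induction k arbitrary: a b c d)
  case 0
  then have "c * a1 + d * a2 = c' * a1 + d' * a2" using pos by simp
  then have 2: "(vec4 a' b' c d, vec4 a' b' c' d') \<in> CG" by (rule A2)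
  have 1: "(vec4 a b c d, vec4 a' b' c d) \<in> CG" using 0 by (intro A1) simp
  show ?case by (rule cg_trans[OF 1 2])
next
  case (Suc k)
  define wa where "wa = a' + k * al"
  define wb where "wb = b' + k * be"
  have wu: "wa * a1 + wb * a2 = a' * a1 + b' * a2 + b2 * k"
  proof -
    have "k * (al * a1 + be * a2) = k * b2" using r(1) by simp
    then show ?thesis unfolding wa_def wb_def by (simp add: algebra_simps)
  qed
  have "a * a1 + b * a2 = (wa + al) * a1 + (wb + be) * a2" using Suc.prems(1) wu r(1)
    by (simp add: algebra_simps)
  then have 1: "(vec4 a b c d, vec4 (wa + al) (wb + be) c d) \<in> CG" by (rule A1)
  have 2: "(vec4 (wa + al) (wb + be) c d, vec4 wa wb (c + ga) (d + de)) \<in> CG" by (rule L3)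
  have "b1 * (wa * a1 + wb * a2) + b2 * ((c + ga) * a1 + (d + de) * a2)
      = b1 * (a * a1 + b * a2) + b2 * (c * a1 + d * a2)"
  proof -
    have "b1 * (a * a1 + b * a2) = b1 * (wa * a1 + wb * a2) + b1 * b2"
      using Suc.prems(1) wu by (simp add: algebra_simps)
    moreover have "b2 * ((c + ga) * a1 + (d + de) * a2) = b2 * (c * a1 + d * a2) + b2 * b1"
    proof -
      have "b2 * (ga * a1 + de * a2) = b2 * b1" using r(2) by simp
      then show ?thesis by (simp add: algebra_simps)
    qed
    ultimately show ?thesis by (simp add: algebra_simps)
  qed
  then have 3: "(vec4 wa wb (c + ga) (d + de), vec4 a' b' c' d') \<in> CG"
    using Suc.prems(2) wu by (intro Suc.IH) simp_all
  show ?case by (rule cg_trans[OF cg_trans[OF 1 2] 3])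
qed

lemma kernel_sub: "kernel_cong ns \<subseteq> CG"
proof clarify
  fix x y assume "(x, y) \<in> kernel_cong ns"
  then have x: "x \<in> vecs 4" and y: "y \<in> vecs 4" and e: "fact_map ns x = fact_map ns y"
    by (auto simp: kernel_cong_def length_ns)
  define a b c d a' b' c' d' where "a = x 0" "b = x 1" "c = x 2" "d = x 3"
    "a' = y 0" "b' = y 1" "c' = y 2" "d' = y 3"
  have xe: "x = vec4 a b c d" and ye: "y = vec4 a' b' c' d'"
    using vecs_vec4[OF x] vecs_vec4[OF y] by (simp_all add: a_b_c_d_a'_b'_c'_d'_def)
  define u v u' v' where "u = a * a1 + b * a2" "v = c * a1 + d * a2" "u' = a' * a1 + b' * a2" "v' = c' * a1 + d' * a2"
  have e2: "b1 * u + b2 * v = b1 * u' + b2 * v'" using e unfolding xe ye fm u_v_u'_v'_def by simp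
  show "(x, y) \<in> CG"
  proof (cases "u' \<le> u")
    case True
    have e3: "u * b1 + v * b2 = u' * b1 + v' * b2" using e2 by (simp add: mult.commute)
    obtain t where "u = u' + t * b2"
      using lin_shift[OF cop34 True e3 pos(4)] by blast
    then have k: "a * a1 + b * a2 = a' * a1 + b' * a2 + b2 * t" unfolding u_v_u'_v'_def by simp
    have "(vec4 a b c d, vec4 a' b' c' d') \<in> CG"
      using e2 unfolding u_v_u'_v'_def by (rule main_k[OF k])
    then show ?thesis using xe ye by simp
  next
    case False
    then have F: "u \<le> u'" by simp
    have e3: "u' * b1 + v' * b2 = u * b1 + v * b2" using e2 by (simp add: mult.commute)
    obtain t where "u' = u + t * b2"
      using lin_shift[OF cop34 F e3 pos(4)] by blast
    then have k: "a' * a1 + b' * a2 = a * a1 + b * a2 + b2 * t" unfolding u_v_u'_v'_def by simp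
    have "(vec4 a' b' c' d', vec4 a b c d) \<in> CG"
      using e2[symmetric] unfolding u_v_u'_v'_def by (rule main_k[OF k])
    then show ?thesis using xe ye cg_sym by simp
  qed
qed


lemma fact_map_vadd: "fact_map ms (vadd x z) = fact_map ms x + fact_map ms z"
  by (simp add: fact_map_def vadd_def sum.distrib algebra_simps)

lemma vadd_vecs: "x \<in> vecs n \<Longrightarrow> z \<in> vecs n \<Longrightarrow> vadd x z \<in> vecs n"
  by (simp add: vecs_def vadd_def)

lemma rho_kernel: "rho \<subseteq> kernel_cong ns"
  using r pos by (auto simp: rho_def R1_def R2_def R3_def kernel_cong_def length_ns fm algebra_simps)

lemma CG_sub: "CG \<subseteq> kernel_cong ns"
proof clarify
  fix x y assume "(x, y) \<in> CG" then show "(x, y) \<in> kernel_cong ns"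
  proof (induction rule: cong_gen.induct)
    case (cg_base p) then show ?case using rho_kernel by auto
  next
    case (cg_refl x) then show ?case by (simp add: kernel_cong_def length_ns)
  next
    case (cg_sym x y) then show ?case by (simp add: kernel_cong_def)
  next
    case (cg_trans x y z) then show ?case by (simp add: kernel_cong_def)
  next
    case (cg_add x y z) then show ?case by (simp add: kernel_cong_def length_ns fact_map_vadd vadd_vecs)
  qed
qed

lemma CG_eq: "CG = kernel_cong ns"
  using CG_sub kernel_sub by blast

lemma Rvals: "fact_map ns (fst R1) = b1 * (a2 * a1)" "fact_map ns (snd R1) = b1 * (a2 * a1)"
  "fact_map ns (fst R2) = b2 * (a2 * a1)" "fact_map ns (snd R2) = b2 * (a2 * a1)"
  "fact_map ns (fst R3) = b1 * b2" "fact_map ns (snd R3) = b1 * b2"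
  using r by (simp_all add: R1_def R2_def R3_def fm mult.commute)

lemma inv3: "q \<in> cong_gen 4 \<sigma> \<Longrightarrow> \<sigma> \<subseteq> rho \<Longrightarrow> R3 \<notin> \<sigma> \<Longrightarrow>
   fst q 0 * a1 + fst q 1 * a2 = snd q 0 * a1 + snd q 1 * a2"
proof (induction q rule: cong_gen.induct)
  case (cg_base p)
  then have "p = R1 \<or> p = R2" by (auto simp: rho_def)
  then show ?case by (auto simp: R1_def R2_def)
next
  case (cg_add x y z) then show ?case by (simp add: vadd_def algebra_simps)
qed auto

lemma inv1: "q \<in> cong_gen 4 \<sigma> \<Longrightarrow> \<sigma> \<subseteq> rho \<Longrightarrow> R1 \<notin> \<sigma> \<Longrightarrow>
   fact_map ns (fst q) = fact_map ns (snd q) \<and> (fact_map ns (fst q) < b1 * b2 \<longrightarrow> fst q 0 = snd q 0 \<and> fst q 1 = snd q 1)"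
proof (induction q rule: cong_gen.induct)
  case (cg_base p)
  then have "p = R2 \<or> p = R3" by (auto simp: rho_def)
  then show ?case using Rvals by (auto simp: R2_def R3_def)
next
  case (cg_add x y z)
  have fx: "fact_map ns (vadd x z) = fact_map ns x + fact_map ns z"
    "fact_map ns (vadd y z) = fact_map ns y + fact_map ns z" by (simp_all only: fact_map_vadd)
  have IH: "fact_map ns x = fact_map ns y" "fact_map ns x < b1 * b2 \<Longrightarrow> x 0 = y 0 \<and> x 1 = y 1"
    using cg_add.IH[OF cg_add.prems] by auto
  show ?case unfolding fst_conv snd_conv fx using IH by (auto simp: vadd_def)
qed auto

lemma inv2: "q \<in> cong_gen 4 \<sigma> \<Longrightarrow> \<sigma> \<subseteq> rho \<Longrightarrow> R2 \<notin> \<sigma> \<Longrightarrow>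
   fact_map ns (fst q) = fact_map ns (snd q) \<and> (fact_map ns (fst q) < b1 * b2 \<longrightarrow> fst q 2 = snd q 2 \<and> fst q 3 = snd q 3)"
proof (induction q rule: cong_gen.induct)
  case (cg_base p)
  then have "p = R1 \<or> p = R3" by (auto simp: rho_def)
  then show ?case using Rvals by (auto simp: R1_def R3_def)
next
  case (cg_add x y z)
  have fx: "fact_map ns (vadd x z) = fact_map ns x + fact_map ns z"
    "fact_map ns (vadd y z) = fact_map ns y + fact_map ns z" by (simp_all only: fact_map_vadd)
  have IH: "fact_map ns x = fact_map ns y" "fact_map ns x < b1 * b2 \<Longrightarrow> x 2 = y 2 \<and> x 3 = y 3"
    using cg_add.IH[OF cg_add.prems] by auto
  show ?case unfolding fst_conv snd_conv fx using IH by (auto simp: vadd_def)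
qed auto

lemma R_in: "R1 \<in> kernel_cong ns" "R2 \<in> kernel_cong ns" "R3 \<in> kernel_cong ns"
  using rho_kernel by (auto simp: rho_def)

lemma minimal: "\<sigma> \<subset> rho \<Longrightarrow> cong_gen 4 \<sigma> \<noteq> kernel_cong ns"
proof
  assume s: "\<sigma> \<subset> rho" and e: "cong_gen 4 \<sigma> = kernel_cong ns"
  then have sub: "\<sigma> \<subseteq> rho" by auto
  from s have "R1 \<notin> \<sigma> \<or> R2 \<notin> \<sigma> \<or> R3 \<notin> \<sigma>" by (auto simp: rho_def)
  then show False
  proof (elim disjE)
    assume n: "R1 \<notin> \<sigma>"
    have "R1 \<in> cong_gen 4 \<sigma>" using e R_in by simp
    then have "fact_map ns (fst R1) < b1 * b2 \<longrightarrow> fst R1 0 = snd R1 0"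
      using inv1[OF _ sub n] by blast
    moreover have "fact_map ns (fst R1) < b1 * b2" using big pos by (simp add: R1_def fm mult.commute)
    ultimately show False using pos by (simp add: R1_def)
  next
    assume n: "R2 \<notin> \<sigma>"
    have "R2 \<in> cong_gen 4 \<sigma>" using e R_in by simp
    then have "fact_map ns (fst R2) < b1 * b2 \<longrightarrow> fst R2 2 = snd R2 2"
      using inv2[OF _ sub n] by blast
    moreover have "fact_map ns (fst R2) < b1 * b2" using big pos by (simp add: R2_def fm mult.commute)
    ultimately show False using pos by (simp add: R2_def)
  next
    assume n: "R3 \<notin> \<sigma>"
    have "R3 \<in> cong_gen 4 \<sigma>" using e R_in by simp
    then have "fst R3 0 * a1 + fst R3 1 * a2 = snd R3 0 * a1 + snd R3 1 * a2"
      using inv3[OF _ sub n] by blast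
    then show False using r pos by (simp add: R3_def)
  qed
qed

lemma card_rho: "card rho = 3"
proof -
  have "R1 \<noteq> R2" "R1 \<noteq> R3" "R2 \<noteq> R3" using pos
    by (auto simp: R1_def R2_def R3_def vec4_eq_iff)
  then show ?thesis by (simp add: rho_def)
qed

lemma CI: "complete_intersection (gen G)"
  unfolding complete_intersection_def
proof (intro exI conjI)
  show "distinct ns" by (rule distinct_ns)
  show "min_gen_sys (gen G) (set ns)" using min_gen set_ns by simp
  show "minimal_presentation ns rho"
    unfolding minimal_presentation_def length_ns
    using CG_eq minimal by (auto simp: rho_def R1_def R2_def R3_def)
  show "finite rho" by (simp add: rho_def)
  show "card rho = length ns - 1" using card_rho length_ns by simp
qed

end
end



abbreviation RHS :: "nat list \<Rightarrow> nat set" where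
  "RHS ns \<equiv> {(\<Sum>i\<in>{1..<length ns}. l i * ns ! i) | l. \<forall>i\<in>{1..<length ns}. l i \<le> phi ns i}"

lemma sum4: "(\<Sum>i\<in>{1..<length [n1,n2,n3,n4::nat]}. l i * [n1,n2,n3,n4] ! i) = l 1 * n2 + l 2 * n3 + l 3 * n4"
proof -
  have "{1..<length [n1,n2,n3,n4]} = {1,2,3::nat}" by auto
  then show ?thesis by simp
qed

lemma RHS4: fixes l :: "nat \<Rightarrow> nat" shows "ns = [n1,n2,n3,n4] \<Longrightarrow> l 1 \<le> phi ns 1 \<Longrightarrow> l 2 \<le> phi ns 2 \<Longrightarrow> l 3 \<le> phi ns 3 \<Longrightarrow>
  l 1 * n2 + l 2 * n3 + l 3 * n4 \<in> RHS ns"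
proof -
  assume ns: "ns = [n1,n2,n3,n4]" and b: "l 1 \<le> phi ns 1" "l 2 \<le> phi ns 2" "l 3 \<le> phi ns 3"
  have s: "{1..<length ns} = {1,2,3::nat}" using ns by auto
  have "\<forall>i::nat\<in>{1..<length ns}. l i \<le> phi ns i" using b s by auto
  moreover have "(\<Sum>i\<in>{1..<length ns}. l i * ns ! i) = l 1 * n2 + l 2 * n3 + l 3 * n4" using ns sum4 by simp
  ultimately have "\<exists>l'. l 1 * n2 + l 2 * n3 + l 3 * n4 = (\<Sum>i\<in>{1..<length ns}. l' i * ns ! i)
     \<and> (\<forall>i\<in>{1..<length ns}. l' i \<le> phi ns i)" by (intro exI[of _ l]) simp
  then show ?thesis by simp
qed

lemma gen_mult_mem: "n \<in> X \<Longrightarrow> k * n \<in> gen X"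
  by (rule gen_mult)

lemma apery_inj:
  assumes "n \<in> X" "w \<in> Apery (gen X) n" "w' \<in> Apery (gen X) n" "w mod n = w' mod n" "w \<le> w'"
  shows "w = w'"
proof (rule ccontr)
  assume ne: "w \<noteq> w'"
  have "n dvd w' - w" using assms(4,5) by (metis mod_eq_dvd_iff_nat)
  then obtain k where k: "w' - w = n * k" by auto
  then have "k \<noteq> 0" using ne assms(5) by (metis diff_is_0_eq le_antisym mult_0_right)
  then obtain j where j: "k = Suc j" using not0_implies_Suc by blast
  have ws: "w \<in> gen X" using assms(2) by (simp add: Apery_def)
  have w'e: "w' = w + n + j * n" using k j assms(5) by (simp add: algebra_simps)
  then have "w' - n = w + j * n" by simp
  moreover have "w + j * n \<in> gen X" using gen_add_closed[OF ws gen_mult[OF assms(1)]] by simp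
  moreover have "n \<le> w'" using w'e by simp
  ultimately show False using assms(3) by (simp add: Apery_def)
qed

lemma apery_inj':
  assumes "n \<in> X" "w \<in> Apery (gen X) n" "w' \<in> Apery (gen X) n" "w mod n = w' mod n"
  shows "w = w'"
  using apery_inj[OF assms] apery_inj[OF assms(1,3,2) assms(4)[symmetric]] by linarith

lemma phi_lower:
  assumes ex: "\<exists>h>0. h * ns ! i \<in> gen (set (take i ns))"
    and no: "\<And>h. 0 < h \<Longrightarrow> h < L \<Longrightarrow> h * ns ! i \<notin> gen (set (take i ns))"
  shows "L - 1 \<le> phi ns i"
proof -
  let ?m = "LEAST h. h > 0 \<and> h * ns ! i \<in> gen (set (take i ns))"
  have "?m > 0 \<and> ?m * ns ! i \<in> gen (set (take i ns))" using LeastI_ex[OF ex] .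
  then have "\<not> ?m < L" using no by blast
  then show ?thesis unfolding phi_def by simp
qed

lemma solve_mod:
  fixes a m t :: nat
  assumes "coprime a m" "m > 0"
  shows "\<exists>l<m. [l * a = t] (mod m)"
proof -
  obtain x where x: "[a * x = 1] (mod m)" using cong_solve_coprime_nat[OF assms(1)] by auto
  define l where "l = (x * t) mod m"
  have "[l * a = x * t * a] (mod m)" unfolding l_def by (simp add: cong_def mod_mult_left_eq)
  moreover have "[x * t * a = t * (a * x)] (mod m)" by (simp add: algebra_simps)
  moreover have "[t * (a * x) = t * 1] (mod m)" using cong_mult[OF cong_refl x] .
  ultimately have "[l * a = t] (mod m)" by (metis cong_trans mult_1_right)
  moreover have "l < m" unfolding l_def using assms(2) by simp
  ultimately show ?thesis by blast
qed

lemma ex_h: "ns = [n1,n2,n3,n4] \<Longrightarrow> n1 > 0 \<Longrightarrow> i \<in> {1,2,3} \<Longrightarrow> \<exists>h>0. h * ns ! i \<in> gen (set (take i ns))"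
proof -
  assume ns: "ns = [n1,n2,n3,n4]" and p: "n1 > 0" and i: "i \<in> {1,2,3}"
  have "n1 \<in> set (take i ns)" using ns i by auto
  then have "n1 * ns ! i \<in> gen (set (take i ns))" using gen_mult by (metis mult.commute)
  then show ?thesis using p by blast
qed

lemma nonfree_G1:
  fixes P Q R n1 n2 n3 n4 :: nat
  assumes ns: "ns = [n1,n2,n3,n4]" and n1: "n1 = P * R" and n2: "n2 = Q * R"
    and pr: "prime P" "prime R" and cQ: "coprime (Q * R) P" and c3: "coprime n3 R" and cPR: "coprime P R"
    and n4: "n4 \<notin> gen {n1, n2, n3}"
    and A: "Apery (gen X) n1 = RHS ns" and X: "n1 \<in> X"
  shows False
proof -
  have Pp: "P > 0" "R > 0" using pr prime_gt_0_nat by auto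
  then have n1p: "n1 > 0" using n1 by simp
  have phi1: "P - 1 \<le> phi ns 1"
  proof (rule phi_lower)
    show "\<exists>h>0. h * ns ! 1 \<in> gen (set (take 1 ns))" using ex_h[OF ns n1p] by simp
    fix h :: nat assume h: "0 < h" "h < P"
    show "h * ns ! 1 \<notin> gen (set (take 1 ns))"
    proof
      assume "h * ns ! 1 \<in> gen (set (take 1 ns))"
      then obtain k where "h * (Q * R) = k * (P * R)" using ns n1 n2 by (auto simp: gen1)
      then have "h * Q = k * P" using Pp by (simp add: algebra_simps)
      then have "P dvd h * Q" by (metis dvd_triv_right)
      moreover have "coprime P Q" using cQ by (simp add: coprime_commute)
      ultimately have "P dvd h" by (simp add: coprime_dvd_mult_left_iff)
      then show False using h by (simp add: nat_dvd_not_less)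
    qed
  qed
  have phi2: "R - 1 \<le> phi ns 2"
  proof (rule phi_lower)
    show "\<exists>h>0. h * ns ! 2 \<in> gen (set (take 2 ns))" using ex_h[OF ns n1p] by simp
    fix h :: nat assume h: "0 < h" "h < R"
    show "h * ns ! 2 \<notin> gen (set (take 2 ns))"
    proof
      assume "h * ns ! 2 \<in> gen (set (take 2 ns))"
      then obtain i j where "h * n3 = i * (P * R) + j * (Q * R)" using ns n1 n2 by (auto simp: gen2)
      then have "h * n3 = R * (i * P + j * Q)" by (simp add: algebra_simps)
      then have "R dvd h * n3" by simp
      then have "R dvd h" using c3 by (metis coprime_commute coprime_dvd_mult_left_iff)
      then show False using h by (simp add: nat_dvd_not_less)
    qed
  qed
  have phi3: "1 \<le> phi ns 3"
  proof -
    have "2 - 1 \<le> phi ns 3"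
    proof (rule phi_lower)
      show "\<exists>h>0. h * ns ! 3 \<in> gen (set (take 3 ns))" using ex_h[OF ns n1p] by simp
      fix h :: nat assume h: "0 < h" "h < 2"
      then have "h = 1" by simp
      then show "h * ns ! 3 \<notin> gen (set (take 3 ns))" using n4 ns by simp
    qed
    then show ?thesis by simp
  qed
  obtain l3 where l3: "l3 < R" "[l3 * n3 = n4] (mod R)"
    using solve_mod[OF c3 Pp(2)] by blast
  obtain l2 where l2: "l2 < P" "[l2 * (Q * R) = n4 + (P - 1) * (l3 * n3)] (mod P)"
    using solve_mod[OF cQ Pp(1)] by blast
  define w where "w = l2 * n2 + l3 * n3"
  have mR: "[w = n4] (mod R)"
  proof -
    have "[l2 * n2 = 0] (mod R)" using n2 by (simp add: cong_0_iff)
    then have "[l2 * n2 + l3 * n3 = 0 + n4] (mod R)" using l3(2) by (rule cong_add)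
    then show ?thesis by (simp add: w_def)
  qed
  have mP: "[w = n4] (mod P)"
  proof -
    have "[l2 * n2 + l3 * n3 = n4 + (P - 1) * (l3 * n3) + l3 * n3] (mod P)"
      using cong_add[OF l2(2) cong_refl[of "l3 * n3"]] n2 by simp
    moreover have "n4 + (P - 1) * (l3 * n3) + l3 * n3 = n4 + P * (l3 * n3)"
      using Pp by (cases P) auto
    ultimately have c1: "[w = n4 + P * (l3 * n3)] (mod P)" unfolding w_def by (simp only: add.assoc)
    have c2: "[n4 + P * (l3 * n3) = n4] (mod P)" by (simp add: cong_def)
    show ?thesis using cong_trans[OF c1 c2] .
  qed
  have "[w = n4] (mod P * R)" by (rule coprime_cong_mult_nat[OF mP mR cPR])
  then have eqm: "w mod n1 = n4 mod n1" using n1 by (simp add: cong_def)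
  let ?l = "\<lambda>i::nat. if i = 1 then l2 else if i = 2 then l3 else (0::nat)"
  have "?l 1 * n2 + ?l 2 * n3 + ?l 3 * n4 \<in> RHS ns"
    using phi1 phi2 l2 l3 by (intro RHS4[OF ns]) auto
  then have wA: "w \<in> Apery (gen X) n1" using A by (simp add: w_def)
  let ?m = "\<lambda>i::nat. if i = 3 then 1 else (0::nat)"
  have "?m 1 * n2 + ?m 2 * n3 + ?m 3 * n4 \<in> RHS ns"
    using phi3 by (intro RHS4[OF ns]) auto
  then have n4A: "n4 \<in> Apery (gen X) n1" using A by simp
  have "w = n4" using apery_inj'[OF X wA n4A eqm] .
  moreover have "w \<in> gen {n1, n2, n3}"
  proof -
    have "w = 0 * n1 + l2 * n2 + l3 * n3" unfolding w_def by simp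
    then show ?thesis unfolding gen3 by blast
  qed
  ultimately show False using n4 by simp
qed

lemma nonfree_G2:
  fixes n1 n2 n3 n4 :: nat
  assumes ns: "ns = [n1,n2,n3,n4]" and c: "coprime n2 n1" and p: "n1 > 0"
    and n3: "n3 \<notin> gen {n1, n2}"
    and A: "Apery (gen X) n1 = RHS ns" and X: "n1 \<in> X"
  shows False
proof -
  have phi1: "n1 - 1 \<le> phi ns 1"
  proof (rule phi_lower)
    show "\<exists>h>0. h * ns ! 1 \<in> gen (set (take 1 ns))" using ex_h[OF ns p] by simp
    fix h :: nat assume h: "0 < h" "h < n1"
    show "h * ns ! 1 \<notin> gen (set (take 1 ns))"
    proof
      assume "h * ns ! 1 \<in> gen (set (take 1 ns))"
      then obtain k where "h * n2 = k * n1" using ns by (auto simp: gen1)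
      then have "n1 dvd h * n2" by (metis dvd_triv_right)
      then have "n1 dvd h" using c by (metis coprime_commute coprime_dvd_mult_left_iff)
      then show False using h by (simp add: nat_dvd_not_less)
    qed
  qed
  have phi2: "1 \<le> phi ns 2"
  proof -
    have "2 - 1 \<le> phi ns 2"
    proof (rule phi_lower)
      show "\<exists>h>0. h * ns ! 2 \<in> gen (set (take 2 ns))" using ex_h[OF ns p] by simp
      fix h :: nat assume h: "0 < h" "h < 2"
      then have "h = 1" by simp
      then show "h * ns ! 2 \<notin> gen (set (take 2 ns))" using n3 ns by simp
    qed
    then show ?thesis by simp
  qed
  obtain l2 where l2: "l2 < n1" "[l2 * n2 = n3] (mod n1)"
    using solve_mod[OF c p] by blast
  let ?l = "\<lambda>i::nat. if i = 1 then l2 else (0::nat)"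
  have "?l 1 * n2 + ?l 2 * n3 + ?l 3 * n4 \<in> RHS ns"
    using phi1 l2 by (intro RHS4[OF ns]) auto
  then have wA: "l2 * n2 \<in> Apery (gen X) n1" using A by simp
  let ?m = "\<lambda>i::nat. if i = 2 then 1 else (0::nat)"
  have "?m 1 * n2 + ?m 2 * n3 + ?m 3 * n4 \<in> RHS ns"
    using phi2 by (intro RHS4[OF ns]) auto
  then have n3A: "n3 \<in> Apery (gen X) n1" using A by simp
  have "l2 * n2 = n3" using apery_inj'[OF X wA n3A] l2(2) by (simp add: cong_def)
  moreover have "l2 * n2 \<in> gen {n1, n2}"
  proof -
    have "l2 * n2 = 0 * n1 + l2 * n2" by simp
    then show ?thesis unfolding gen2 by blast
  qed
  ultimately show False using n3 by simp
qed




lemma list4: "length xs = 4 \<Longrightarrow> xs = [xs!0, xs!1, xs!2, xs!3]"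
  by (cases xs; cases "tl xs"; cases "tl (tl xs)"; cases "tl (tl (tl xs))"; simp)

context four
begin

lemma card_G: "card G = 4"
  using neq by (simp add: G_def)

lemma cops: "coprime a1 a2" "coprime a1 b1" "coprime a1 b2" "coprime a2 b1" "coprime a2 b2" "coprime b1 b2"
  using pr dist by (simp_all add: primes_coprime)

lemma nf1:
  assumes d: "distinct ms" and s: "set ms = G" and m0: "ms ! 0 = a1 * b1"
    and A: "Apery (gen G) (ms ! 0) = RHS ms"
  shows False
proof -
  have len: "length ms = 4" using distinct_card[OF d] s card_G by simp
  define n2 n3 n4 where "n2 = ms ! 1" "n3 = ms ! 2" "n4 = ms ! 3"
  have ms: "ms = [a1 * b1, n2, n3, n4]" using list4[OF len] m0 n2_n3_n4_def by simp
  have dd: "distinct [a1 * b1, n2, n3, n4]" using d ms by simp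
  have sG: "{a1 * b1, n2, n3, n4} = G" using s ms by simp
  have inG: "n2 \<in> G" "n3 \<in> G" "n4 \<in> G" using sG by auto
  have g4: "G - {n4} = {a1 * b1, n2, n3}" using sG dd by auto
  have n4g: "n4 \<notin> gen {a1 * b1, n2, n3}" using irr inG(3) g4 by auto
  have g3: "{a1 * b1, n2} \<subseteq> G - {n3}" using sG dd by auto
  have n3g: "n3 \<notin> gen {a1 * b1, n2}" using irr inG(2) gen_mono[OF g3] by auto
  have X: "a1 * b1 \<in> G" by (simp add: G_def)
  have A': "Apery (gen G) (a1 * b1) = RHS ms" using A m0 by simp
  have "n2 \<in> {a2 * b1, a1 * b2, a2 * b2}" using inG(1) dd by (auto simp: G_def)
  then show False
  proof (elim insertE)
    assume n2: "n2 = a2 * b1"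
    have "n3 \<in> {a1 * b2, a2 * b2}" using inG(2) dd n2 by (auto simp: G_def)
    then have c3: "coprime n3 b1" using cops by (auto simp: coprime_commute)
    show False
      by (rule nonfree_G1[OF ms refl n2 pr(1) pr(3) _ c3 cops(2) n4g A' X])
         (use cops in \<open>simp add: coprime_commute\<close>)
  next
    assume n2: "n2 = a1 * b2"
    have "n3 \<in> {a2 * b1, a2 * b2}" using inG(2) dd n2 by (auto simp: G_def)
    then have c3: "coprime n3 a1" using cops by (auto simp: coprime_commute)
    have ms': "ms = [b1 * a1, n2, n3, n4]" using ms by (simp add: mult.commute)
    have A'': "Apery (gen G) (b1 * a1) = RHS ms" using A' by (simp add: mult.commute)
    have n4g': "n4 \<notin> gen {b1 * a1, n2, n3}" using n4g by (simp add: mult.commute)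
    have X': "b1 * a1 \<in> G" using X by (simp add: mult.commute)
    show False
      by (rule nonfree_G1[where Q=b2, OF ms' refl _ pr(3) pr(1) _ c3 _ n4g' A'' X'])
         (use cops n2 in \<open>simp_all add: coprime_commute mult.commute\<close>)
  next
    assume n2: "n2 = a2 * b2"
    have c: "coprime n2 (a1 * b1)" using cops n2 by (simp add: coprime_commute)
    show False
      by (rule nonfree_G2[OF ms c _ n3g A' X]) (use pos in simp)
  qed simp
qed

end




theorem mainTheorem9:
  fixes p1 p2 p3 p4 :: nat
  assumes "prime p1" "prime p2" "prime p3" "prime p4"
    and "distinct [p1, p2, p3, p4]"
    and "p3 > p1 * p2" "p4 > p1 * p2"
  shows "numerical_semigroup (gen {p1 * p3, p2 * p3, p1 * p4, p2 * p4}) \<and>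
         complete_intersection (gen {p1 * p3, p2 * p3, p1 * p4, p2 * p4}) \<and>
         \<not> free_sg (gen {p1 * p3, p2 * p3, p1 * p4, p2 * p4})"
proof -
  interpret f: four p1 p2 p3 p4 using assms by unfold_locales auto
  interpret f2: four p2 p1 p3 p4 using assms by unfold_locales (auto simp: mult.commute)
  interpret f3: four p1 p2 p4 p3 using assms by unfold_locales auto
  interpret f4: four p2 p1 p4 p3 using assms by unfold_locales (auto simp: mult.commute)
  have Geq: "{p1 * p3, p2 * p3, p1 * p4, p2 * p4} = f.G" by (simp add: f.G_def)
  have G2: "f2.G = f.G" "f3.G = f.G" "f4.G = f.G" by (auto simp: f.G_def f2.G_def f3.G_def f4.G_def)
  obtain al be where ab: "p4 = al * p1 + be * p2"
    using two_gen_repr[OF f.cops(1)] f.pos assms(7) by (metis less_imp_le)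
  obtain ga de where gd: "p3 = ga * p1 + de * p2"
    using two_gen_repr[OF f.cops(1)] f.pos assms(6) by (metis less_imp_le)
  have ci: "complete_intersection (gen f.G)"
    by (rule f.CI[of al be ga de]) (use ab gd in simp_all)
  have nf: "\<not> free_sg (gen f.G)"
  proof
    assume "free_sg (gen f.G)"
    then obtain ns where d: "distinct ns" and m: "min_gen_sys (gen f.G) (set ns)" and ne: "ns \<noteq> []"
      and A: "Apery (gen f.G) (ns ! 0) = RHS ns"
      unfolding free_sg_def by blast
    have s: "set ns = f.G" using min_gen_unique[OF f.irr m] .
    have "ns ! 0 \<in> f.G" using s ne by (metis nth_mem length_greater_0_conv)
    then show False unfolding f.G_def
    proof (elim insertE)
      assume "ns ! 0 = p1 * p3" then show False using f.nf1[OF d s _ A] by simp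
    next
      assume "ns ! 0 = p2 * p3" then show False using f2.nf1[of ns] d s A G2 by simp
    next
      assume "ns ! 0 = p1 * p4" then show False using f3.nf1[of ns] d s A G2 by simp
    next
      assume "ns ! 0 = p2 * p4" then show False using f4.nf1[of ns] d s A G2 by simp
    qed simp
  qed
  show ?thesis using Geq f.numsg ci nf by simp
qed



end
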